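(* Let $m\ge1$, $N=2^m$, let $\mathcal{A}\subseteq[0,N-1]$ with $\mathcal{A}$ and $\mathcal{A}^c=[0,N-1]\setminus\mathcal{A}$ nonempty, and let $\mathbf{P}\in\mathbb{F}_2^{N\times N}$ be upper triangular with unit diagonal. Then $$\mathcal{C}_{\boldsymbol{G}_N}([\max(\mathcal{A}^c)+1,N-1])\subseteq\mathcal{C}_{\mathbf{P}\boldsymbol{G}_N}(\mathcal{A})\subseteq\mathcal{C}_{\boldsymbol{G}_N}([\min(\mathcal{A}),N-1]),$$ and $$\mathcal{C}_{\boldsymbol{G}_N}([N-\min(\mathcal{A}),N-1])\subseteq\mathcal{C}_{\mathbf{P}\boldsymbol{G}_N}(\mathcal{A})^{\perp}\subseteq\mathcal{C}_{\boldsymbol{G}_N}([N-1-\max(\mathcal{A}^c),N-1]).$$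
   Context: $[\ell,u]=\{\ell,\dots,u\}$ (empty if $\ell>u$). $\boldsymbol{G}_N=\begin{pmatrix}1&0\\1&1\end{pmatrix}^{\otimes m}$ over $\mathbb{F}_2$, rows/columns indexed by $0,\dots,N-1$; $\mathcal{C}_{\mathbf{B}}(\mathcal{S})$ is the code spanned by the rows of $\mathbf{B}$ indexed by $\mathcal{S}$. $\perp$ is the dual code for the standard inner product over $\mathbb{F}_2$. *)

theory Defs
  imports Main "HOL-Library.Z2"
begin

(* Matrices over F_2 are functions nat => nat => bit, meaningful on indices < size;
   vectors of length N are functions nat => bit, required to vanish outside [0,N-1]. *)

type_synonym vec = "nat \<Rightarrow> bit"
type_synonym mat = "nat \<Rightarrow> nat \<Rightarrow> bit"

definition G2 :: mat where
  "G2 i j = (if i < 2 \<and> j < 2 \<and> j \<le> i then 1 else 0)"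

definition kron :: "nat \<Rightarrow> mat \<Rightarrow> mat \<Rightarrow> mat" where
  "kron b A B i j = A (i div b) (j div b) * B (i mod b) (j mod b)"

(* G_{2^m} = [[1,0],[1,1]]^{\<otimes> m}; G_1 = [1] *)
fun GN :: "nat \<Rightarrow> mat" where
  "GN 0 = (\<lambda>i j. if i = 0 \<and> j = 0 then 1 else 0)"
| "GN (Suc m) = kron (2 ^ m) G2 (GN m)"

definition matmul :: "nat \<Rightarrow> mat \<Rightarrow> mat \<Rightarrow> mat" where
  "matmul n A B i j = (\<Sum>k<n. A i k * B k j)"

definition upper_unitriangular :: "nat \<Rightarrow> mat \<Rightarrow> bool" where
  "upper_unitriangular n P \<longleftrightarrow> (\<forall>i<n. \<forall>j<n. (j < i \<longrightarrow> P i j = 0) \<and> (i = j \<longrightarrow> P i j = 1))"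

definition row :: "nat \<Rightarrow> mat \<Rightarrow> nat \<Rightarrow> vec" where
  "row n B i = (\<lambda>j. if j < n then B i j else 0)"

definition code :: "nat \<Rightarrow> mat \<Rightarrow> nat set \<Rightarrow> vec set" where
  "code n B S = {v. \<exists>c :: nat \<Rightarrow> bit. v = (\<lambda>j. \<Sum>i\<in>S \<inter> {..<n}. c i * row n B i j)}"

definition inner :: "nat \<Rightarrow> vec \<Rightarrow> vec \<Rightarrow> bit" where
  "inner n u v = (\<Sum>j<n. u j * v j)"

definition dual :: "nat \<Rightarrow> vec set \<Rightarrow> vec set" where
  "dual n C = {v. (\<forall>j\<ge>n. v j = 0) \<and> (\<forall>u\<in>C. inner n u v = 0)}"

end

theory Submission
  imports Defs
begin


declare add_bit_eq_xor[simp del] mult_bit_eq_and[simp del]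

lemma bit_dbl [simp]: "(x::bit) + x = 0"
  by (cases x) simp_all

definition subsp :: "vec set \<Rightarrow> bool" where
  "subsp V \<longleftrightarrow> (\<lambda>j. 0) \<in> V \<and> (\<forall>u\<in>V. \<forall>w\<in>V. (\<lambda>j. u j + w j) \<in> V) \<and> (\<forall>c u. u \<in> V \<longrightarrow> (\<lambda>j. c * u j) \<in> V)"

lemma subsp_add: "subsp V \<Longrightarrow> u \<in> V \<Longrightarrow> w \<in> V \<Longrightarrow> (\<lambda>j. u j + w j) \<in> V"
  unfolding subsp_def by blast
lemma subsp_zero: "subsp V \<Longrightarrow> (\<lambda>j. 0) \<in> V"
  unfolding subsp_def by blast
lemma subsp_smult: "subsp V \<Longrightarrow> u \<in> V \<Longrightarrow> (\<lambda>j. c * u j) \<in> V"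
  unfolding subsp_def by blast

lemma span_sub:
  assumes "finite S" "subsp V" "\<forall>i\<in>S. f i \<in> V"
  shows "(\<lambda>j. \<Sum>i\<in>S. c i * f i j) \<in> V"
  using assms(1,3)
proof (induction S rule: finite_induct)
  case empty then show ?case using subsp_zero[OF assms(2)] by simp
next
  case (insert x F)
  have a: "(\<lambda>j. c x * f x j) \<in> V" using insert.prems subsp_smult[OF assms(2)] by simp
  have b: "(\<lambda>j. \<Sum>i\<in>F. c i * f i j) \<in> V" using insert.prems insert.IH by simp
  have "(\<lambda>j. (c x * f x j) + (\<Sum>i\<in>F. c i * f i j)) \<in> V"
    by (rule subsp_add[OF assms(2) a b])
  moreover have "(\<lambda>j. \<Sum>i\<in>insert x F. c i * f i j) = (\<lambda>j. (c x * f x j) + (\<Sum>i\<in>F. c i * f i j))"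
    using insert.hyps by (simp add: sum.insert)
  ultimately show ?case by simp
qed

lemma code_subsp: "subsp (code n B S)"
  unfolding subsp_def code_def
proof (intro conjI ballI allI impI)
  show "(\<lambda>j. 0::bit) \<in> {v. \<exists>c. v = (\<lambda>j. \<Sum>i\<in>S \<inter> {..<n}. c i * row n B i j)}"
    by (auto intro!: exI[of _ "\<lambda>_. 0"])
next
  fix u w assume "u \<in> {v. \<exists>c. v = (\<lambda>j. \<Sum>i\<in>S \<inter> {..<n}. c i * row n B i j)}"
    "w \<in> {v. \<exists>c. v = (\<lambda>j. \<Sum>i\<in>S \<inter> {..<n}. c i * row n B i j)}"
  then obtain c d where "u = (\<lambda>j. \<Sum>i\<in>S \<inter> {..<n}. c i * row n B i j)"
     "w = (\<lambda>j. \<Sum>i\<in>S \<inter> {..<n}. d i * row n B i j)" by auto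
  then show "(\<lambda>j. u j + w j) \<in> {v. \<exists>c. v = (\<lambda>j. \<Sum>i\<in>S \<inter> {..<n}. c i * row n B i j)}"
    by (auto intro!: exI[of _ "\<lambda>i. c i + d i"] simp: sum.distrib distrib_right)
next
  fix a u assume "u \<in> {v. \<exists>c. v = (\<lambda>j. \<Sum>i\<in>S \<inter> {..<n}. c i * row n B i j)}"
  then obtain c where "u = (\<lambda>j. \<Sum>i\<in>S \<inter> {..<n}. c i * row n B i j)" by auto
  then show "(\<lambda>j. a * u j) \<in> {v. \<exists>c. v = (\<lambda>j. \<Sum>i\<in>S \<inter> {..<n}. c i * row n B i j)}"
    by (auto intro!: exI[of _ "\<lambda>i. a * c i"] simp: sum_distrib_left mult.assoc)
qed

lemma row_in_code: "i \<in> S \<Longrightarrow> i < n \<Longrightarrow> row n B i \<in> code n B S"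
  unfolding code_def
  by (auto intro!: exI[of _ "\<lambda>k. if k = i then 1 else 0"] simp: if_distrib[of "\<lambda>x. x * _"] sum.delta cong: if_cong)

lemma code_sub:
  assumes "subsp V" "\<forall>i\<in>S \<inter> {..<n}. row n B i \<in> V"
  shows "code n B S \<subseteq> V"
  using span_sub[OF _ assms(1), of "S \<inter> {..<n}" "row n B"] assms(2)
  unfolding code_def by auto

lemma inner_subsp: "subsp {w. inner n w v = 0}"
  unfolding subsp_def inner_def
proof (intro conjI ballI allI impI)
  fix u w assume "u \<in> {w. (\<Sum>j<n. w j * v j) = 0}" "w \<in> {w. (\<Sum>j<n. w j * v j) = 0}"
  then show "(\<lambda>j. u j + w j) \<in> {w. (\<Sum>j<n. w j * v j) = 0}"
    by (simp add: sum.distrib distrib_right)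
next
  fix c u assume "u \<in> {w. (\<Sum>j<n. w j * v j) = 0}"
  then show "(\<lambda>j. c * u j) \<in> {w. (\<Sum>j<n. w j * v j) = 0}"
    by (simp add: sum_distrib_left[symmetric] mult.assoc)
qed simp

lemma inner_subsp2: "subsp {v. inner n w v = 0}"
  unfolding subsp_def inner_def
proof (intro conjI ballI allI impI)
  fix u v assume "u \<in> {v. (\<Sum>j<n. w j * v j) = 0}" "v \<in> {v. (\<Sum>j<n. w j * v j) = 0}"
  then show "(\<lambda>j. u j + v j) \<in> {v. (\<Sum>j<n. w j * v j) = 0}"
    by (simp add: sum.distrib distrib_left)
next
  fix c u assume "u \<in> {v. (\<Sum>j<n. w j * v j) = 0}"
  then show "(\<lambda>j. c * u j) \<in> {v. (\<Sum>j<n. w j * v j) = 0}"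
    by (simp add: sum_distrib_left[symmetric] mult.left_commute)
qed simp



fun disj :: "nat \<Rightarrow> nat \<Rightarrow> nat \<Rightarrow> bool" where
  "disj 0 i k = True"
| "disj (Suc m) i k = (\<not>(i div 2^m = 1 \<and> k div 2^m = 1) \<and> disj m (i mod 2^m) (k mod 2^m))"

lemma div_cases2: "(i div n = 0 \<and> i mod n = i \<and> i < n) \<or> (i div n = 1 \<and> i = n + i mod n \<and> i \<ge> n)" if "(i::nat) < 2 * n"
proof (cases "i < n")
  case True then show ?thesis by simp
next
  case False
  then have n: "n > 0" "i \<ge> n" using that by auto
  have "i div n < 2" using that by (simp add: div_less_iff_less_mult mult.commute)
  moreover have "i div n \<ge> 1" using n by (simp add: div_greater_zero_iff Suc_le_eq)
  ultimately have "i div n = 1" by simp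
  moreover have "i = i div n * n + i mod n" by simp
  ultimately show ?thesis using n by simp
qed

lemma plus_div1: "j < n \<Longrightarrow> ((n::nat) + j) div n = 1"
  by (simp add: div_add_self1)
lemma plus_mod1: "j < n \<Longrightarrow> ((n::nat) + j) mod n = j"
  by simp

lemma GN_nz: "GN m i j \<noteq> 0 \<Longrightarrow> i < 2^m \<and> j < 2^m \<and> j \<le> i"
proof (induction m arbitrary: i j)
  case 0 then show ?case by (auto split: if_splits)
next
  case (Suc m)
  let ?n = "2^m :: nat"
  have g: "G2 (i div ?n) (j div ?n) \<noteq> 0" and r: "GN m (i mod ?n) (j mod ?n) \<noteq> 0"
    using Suc.prems by (auto simp: kron_def)
  from g have a: "i div ?n < 2" "j div ?n < 2" "j div ?n \<le> i div ?n" by (auto simp: G2_def split: if_splits)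
  from Suc.IH[OF r] have b: "j mod ?n \<le> i mod ?n" by simp
  have "i < 2 * ?n" using a(1) by (simp add: div_less_iff_less_mult mult.commute)
  moreover have "j < 2 * ?n" using a(2) by (simp add: div_less_iff_less_mult mult.commute)
  moreover have "j \<le> i"
  proof -
    have "j = j div ?n * ?n + j mod ?n" by (rule div_mult_mod_eq[symmetric])
    also have "\<dots> \<le> i div ?n * ?n + i mod ?n" using a(3) b by (intro add_mono mult_le_mono1) auto
    also have "\<dots> = i" by (rule div_mult_mod_eq)
    finally show ?thesis .
  qed
  ultimately show ?case by simp
qed

lemma GN_diag: "i < 2^m \<Longrightarrow> GN m i i = 1"
proof (induction m arbitrary: i)
  case 0 then show ?case by simp
next
  case (Suc m)
  have "i div 2^m < 2" using Suc.prems by (simp add: div_less_iff_less_mult)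
  then show ?case using Suc by (simp add: kron_def G2_def)
qed

lemma sum_split2: "(\<Sum>j<2*(n::nat). f j) = (\<Sum>j<n. f j) + (\<Sum>j<n. f (n + j))"
proof -
  have "{..<2*n} = {..<n} \<union> {n..<2*n}" by auto
  moreover have "sum f ({..<n} \<union> {n..<2*n}) = sum f {..<n} + sum f {n..<2*n}"
    by (rule sum.union_disjoint) auto
  ultimately have "(\<Sum>j<2*n. f j) = (\<Sum>j<n. f j) + (\<Sum>j\<in>{n..<2*n}. f j)"
    by simp
  also have "(\<Sum>j\<in>{n..<2*n}. f j) = (\<Sum>j<n. f (n + j))"
    using sum.shift_bounds_nat_ivl[of f 0 n n] by (simp add: lessThan_atLeast0 add.commute mult_2)
  finally show ?thesis .
qed

lemma GN_inner: "i < 2^m \<Longrightarrow> k < 2^m \<Longrightarrow> (\<Sum>j<2^m. GN m i j * GN m k j) = (if disj m i k then 1 else 0)"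
proof (induction m arbitrary: i k)
  case 0 then show ?case by simp
next
  case (Suc m)
  let ?n = "2^m :: nat"
  let ?S = "\<Sum>j<?n. GN m (i mod ?n) j * GN m (k mod ?n) j"
  have lo: "\<And>x j. x < 2 * ?n \<Longrightarrow> j < ?n \<Longrightarrow> GN (Suc m) x j = GN m (x mod ?n) j"
    by (auto simp: kron_def G2_def div_less_iff_less_mult mult.commute)
  have hi: "\<And>x j. x < 2 * ?n \<Longrightarrow> j < ?n \<Longrightarrow> GN (Suc m) x (?n + j) = (if x div ?n = 1 then GN m (x mod ?n) j else 0)"
  proof -
    fix x j assume a: "x < 2 * ?n" "j < ?n"
    show "GN (Suc m) x (?n + j) = (if x div ?n = 1 then GN m (x mod ?n) j else 0)"
      using div_cases2[OF a(1)] a(2) by (auto simp: kron_def G2_def plus_div1 plus_mod1)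
  qed
  have ik: "i < 2 * ?n" "k < 2 * ?n" using Suc.prems by auto
  have "(\<Sum>j<2^Suc m. GN (Suc m) i j * GN (Suc m) k j)
      = (\<Sum>j<?n. GN (Suc m) i j * GN (Suc m) k j) + (\<Sum>j<?n. GN (Suc m) i (?n + j) * GN (Suc m) k (?n + j))"
    using sum_split2 by simp
  also have "(\<Sum>j<?n. GN (Suc m) i j * GN (Suc m) k j) = ?S"
    using ik lo by (intro sum.cong) auto
  also have "(\<Sum>j<?n. GN (Suc m) i (?n + j) * GN (Suc m) k (?n + j)) = (if i div ?n = 1 \<and> k div ?n = 1 then ?S else 0)"
    using ik hi by (auto intro!: sum.neutral)
  finally have e: "(\<Sum>j<2^Suc m. GN (Suc m) i j * GN (Suc m) k j) = ?S + (if i div ?n = 1 \<and> k div ?n = 1 then ?S else 0)" .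
  have "?S = (if disj m (i mod ?n) (k mod ?n) then 1 else 0)" by (rule Suc.IH) auto
  then show ?case unfolding e by auto
qed

lemma disj_sum: "disj m i k \<Longrightarrow> i < 2^m \<Longrightarrow> k < 2^m \<Longrightarrow> i + k < 2^m"
proof (induction m arbitrary: i k)
  case 0 then show ?case by simp
next
  case (Suc m)
  let ?n = "2^m :: nat"
  have ik: "i < 2 * ?n" "k < 2 * ?n" using Suc.prems by auto
  have IH: "i mod ?n + k mod ?n < ?n" using Suc by simp
  show ?case using div_cases2[OF ik(1)] div_cases2[OF ik(2)] IH Suc.prems(1) by auto
qed

lemma disj_comp: "i0 < 2^m \<Longrightarrow> i < 2^m \<Longrightarrow> disj m i (2^m - 1 - i0) \<Longrightarrow> i \<le> i0"
proof (induction m arbitrary: i i0)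
  case 0 then show ?case by simp
next
  case (Suc m)
  let ?n = "2^m :: nat"
  have ik: "i < 2 * ?n" "i0 < 2 * ?n" using Suc.prems by auto
  show ?case
  proof (cases "i0 < ?n")
    case True
    define t where "t = ?n - 1 - i0"
    have t: "t < ?n" unfolding t_def using True by simp
    have c: "2^Suc m - 1 - i0 = ?n + t" using True unfolding t_def by simp
    have d1: "(2^Suc m - 1 - i0) div ?n = 1" "(2^Suc m - 1 - i0) mod ?n = ?n - 1 - i0"
      unfolding c using plus_div1[OF t] plus_mod1[OF t] t_def by auto
    have "i div ?n \<noteq> 1" using Suc.prems(3) d1 by simp
    then have "i < ?n" using div_cases2[OF ik(1)] by auto
    then show ?thesis using Suc.IH[OF True, of i] Suc.prems(3) d1 by simp
  next
    case False
    then obtain r where r: "i0 = ?n + r" "r < ?n" using ik(2) by (metis add.commute le_add_diff_inverse2 mult_2 nat_add_left_cancel_less not_less)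
    have c: "2^Suc m - 1 - i0 = ?n - 1 - r" using r by simp
    have d1: "(2^Suc m - 1 - i0) mod ?n = ?n - 1 - r" unfolding c by simp
    have "i mod ?n \<le> r" using Suc.IH[OF r(2), of "i mod ?n"] Suc.prems(3) d1 by simp
    then show ?thesis using r div_cases2[OF ik(1)] by auto
  qed
qed

lemma disj_comp_self: "i0 < 2^m \<Longrightarrow> disj m i0 (2^m - 1 - i0)"
proof (induction m arbitrary: i0)
  case 0 then show ?case by simp
next
  case (Suc m)
  let ?n = "2^m :: nat"
  have ik: "i0 < 2 * ?n" using Suc.prems by auto
  show ?case
  proof (cases "i0 < ?n")
    case True
    define t where "t = ?n - 1 - i0"
    have t: "t < ?n" unfolding t_def using True by simp
    have c: "2^Suc m - 1 - i0 = ?n + t" using True unfolding t_def by simp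
    have d1: "(2^Suc m - 1 - i0) div ?n = 1" "(2^Suc m - 1 - i0) mod ?n = ?n - 1 - i0"
      unfolding c using plus_div1[OF t] plus_mod1[OF t] t_def by auto
    then show ?thesis using Suc.IH[OF True] True by simp
  next
    case False
    then obtain r where r: "i0 = ?n + r" "r < ?n" using ik by (metis add.commute le_add_diff_inverse2 mult_2 nat_add_left_cancel_less not_less)
    have c: "2^Suc m - 1 - i0 = ?n - 1 - r" using r by simp
    have d1: "(2^Suc m - 1 - i0) mod ?n = ?n - 1 - r" "(2^Suc m - 1 - i0) div ?n = 0" unfolding c by auto
    then show ?thesis using Suc.IH[OF r(2)] r by simp
  qed
qed



lemma disj_sym: "disj m i k = disj m k i"
  by (induction m arbitrary: i k) auto

lemma row_inner: "i < 2^m \<Longrightarrow> k < 2^m \<Longrightarrow>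
  inner (2^m) (row (2^m) (GN m) i) (row (2^m) (GN m) k) = (if disj m i k then 1 else 0)"
  unfolding inner_def row_def using GN_inner[of i m k] by simp

lemma inner_lin: "inner n u (\<lambda>j. \<Sum>i\<in>S. c i * w i j) = (\<Sum>i\<in>S. c i * inner n u (w i))"
  unfolding inner_def
  by (simp add: sum_distrib_left sum.swap[of _ S] mult.left_commute)

lemma code_vanish: "v \<in> code n B S \<Longrightarrow> j \<ge> n \<Longrightarrow> v j = 0"
  unfolding code_def row_def by auto

lemma rowPG: assumes "i < N" "upper_unitriangular N P"
  shows "row N (matmul N P B) i = (\<lambda>j. \<Sum>k\<in>{i..<N}. P i k * row N B k j)"
proof
  fix j
  show "row N (matmul N P B) i j = (\<Sum>k\<in>{i..<N}. P i k * row N B k j)"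
  proof (cases "j < N")
    case True
    have "row N (matmul N P B) i j = (\<Sum>k<N. P i k * B k j)"
      using True by (simp add: row_def matmul_def)
    also have "\<dots> = (\<Sum>k\<in>{i..<N}. P i k * B k j)"
      using assms unfolding upper_unitriangular_def
      by (intro sum.mono_neutral_right) auto
    finally show ?thesis using True by (simp add: row_def)
  qed (simp add: row_def)
qed

lemma rowPG2: assumes "i < N" "upper_unitriangular N P"
  shows "row N B i = (\<lambda>j. row N (matmul N P B) i j + (\<Sum>k\<in>{Suc i..<N}. P i k * row N B k j))"
proof -
  have "P i i = 1" using assms unfolding upper_unitriangular_def by auto
  then have e: "row N (matmul N P B) i = (\<lambda>j. row N B i j + (\<Sum>k\<in>{Suc i..<N}. P i k * row N B k j))"
    unfolding rowPG[OF assms] using assms(1) by (simp add: sum.atLeast_Suc_lessThan)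
  show ?thesis unfolding e by (simp add: add.assoc)
qed



lemma unit_in_span:
  assumes "l < 2^m"
  shows "(\<lambda>j. if j = l then 1 else 0) \<in> code (2^m) (GN m) UNIV"
  using assms
proof (induction l rule: less_induct)
  case (less l)
  let ?N = "2^m :: nat"
  let ?e = "\<lambda>l j. if j = l then (1::bit) else 0"
  let ?V = "code ?N (GN m) UNIV"
  have s: "(\<lambda>j. \<Sum>k\<in>{..<l}. GN m l k * ?e k j) \<in> ?V"
  proof (rule span_sub[OF _ code_subsp])
    show "\<forall>i\<in>{..<l}. ?e i \<in> ?V"
    proof
      fix i assume "i \<in> {..<l}"
      then have "i < l" "i < 2^m" using less.prems by auto
      then show "?e i \<in> ?V" using less.IH by blast
    qed
  qed simp
  have r: "row ?N (GN m) l \<in> ?V" using less by (intro row_in_code) auto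
  have eq: "?e l = (\<lambda>j. row ?N (GN m) l j + (\<Sum>k\<in>{..<l}. GN m l k * ?e k j))"
  proof
    fix j
    have sj: "(\<Sum>k\<in>{..<l}. GN m l k * ?e k j) = (if j < l then GN m l j else 0)"
    proof -
      have "(\<Sum>k\<in>{..<l}. GN m l k * ?e k j) = (\<Sum>k\<in>{..<l}. if k = j then GN m l j else 0)"
        by (rule sum.cong) auto
      also have "\<dots> = (if j < l then GN m l j else 0)" by (simp add: sum.delta)
      finally show ?thesis .
    qed
    show "?e l j = row ?N (GN m) l j + (\<Sum>k\<in>{..<l}. GN m l k * ?e k j)"
    proof (cases "j < l")
      case True
      then show ?thesis unfolding sj row_def using less.prems by simp
    next
      case False
      show ?thesis
      proof (cases "j = l")
        case True
        then show ?thesis unfolding sj row_def using less.prems GN_diag[of l m] by simp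
      next
        case jl: False
        then have "GN m l j = 0" using GN_nz[of m l j] False by force
        then show ?thesis unfolding sj row_def using jl False by simp
      qed
    qed
  qed
  show ?case unfolding eq by (rule subsp_add[OF code_subsp r s])
qed

lemma all_in_span:
  assumes "\<forall>j\<ge>2^m. v j = 0"
  shows "v \<in> code (2^m) (GN m) UNIV"
proof -
  let ?N = "2^m :: nat"
  have "(\<lambda>j. \<Sum>l\<in>{..<?N}. v l * (if j = l then 1 else 0)) \<in> code ?N (GN m) UNIV"
    by (rule span_sub[OF _ code_subsp]) (simp_all add: unit_in_span)
  moreover have "(\<lambda>j. \<Sum>l\<in>{..<?N}. v l * (if j = l then 1 else 0)) = v"
  proof
    fix j show "(\<Sum>l\<in>{..<?N}. v l * (if j = l then 1 else 0)) = v j"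
    proof -
      have "(\<Sum>l\<in>{..<?N}. v l * (if j = l then 1 else 0)) = (\<Sum>l\<in>{..<?N}. if l = j then v j else 0)"
        by (rule sum.cong) auto
      also have "\<dots> = v j" using assms by (simp add: sum.delta)
      finally show ?thesis .
    qed
  qed
  ultimately show ?thesis by simp
qed

theorem proposition4:
  fixes m N :: nat and A :: "nat set" and P :: mat
  assumes "m \<ge> 1" and "N = 2 ^ m"
    and "A \<subseteq> {0..N-1}" and "A \<noteq> {}" and "{0..N-1} - A \<noteq> {}"
    and "upper_unitriangular N P"
  shows "code N (GN m) {Max ({0..N-1} - A) + 1 .. N-1} \<subseteq> code N (matmul N P (GN m)) A
       \<and> code N (matmul N P (GN m)) A \<subseteq> code N (GN m) {Min A .. N-1}
       \<and> code N (GN m) {N - Min A .. N-1} \<subseteq> dual N (code N (matmul N P (GN m)) A)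
       \<and> dual N (code N (matmul N P (GN m)) A) \<subseteq> code N (GN m) {N - 1 - Max ({0..N-1} - A) .. N-1}"
proof -
  let ?G = "GN m" and ?PG = "matmul N P (GN m)"
  define Ac where "Ac = {0..N-1} - A"
  define a where "a = Max Ac"
  define b where "b = Min A"
  have Npos: "N > 0" using assms(2) by simp
  have finA: "finite A" using assms(3) finite_subset by blast
  have finAc: "finite Ac" by (simp add: Ac_def)
  have aAc: "a \<in> Ac" unfolding a_def using finAc assms(5) Ac_def by (intro Max_in) auto
  then have aN: "a < N" "a \<notin> A" using Npos unfolding Ac_def by auto
  have above: "i \<in> A" if "a < i" "i < N" for i
  proof (rule ccontr)
    assume "i \<notin> A"
    then have "i \<in> Ac" using that unfolding Ac_def by auto
    then have "i \<le> a" unfolding a_def using finAc by simp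
    then show False using that by simp
  qed
  have AN: "i < N" if "i \<in> A" for i using that assms(3) Npos by auto
  have bA: "b \<in> A" unfolding b_def using finA assms(4) by simp
  have bN: "b < N" using AN bA by simp
  have bmin: "b \<le> i" if "i \<in> A" for i unfolding b_def using finA that by simp

  have C1i: "row N ?G i \<in> code N ?PG A" if "a < i" "i < N" for i
    using that
  proof (induction "N - i" arbitrary: i rule: less_induct)
    case less
    have ks: "\<forall>k\<in>{Suc i..<N}. row N ?G k \<in> code N ?PG A"
    proof
      fix k assume "k \<in> {Suc i..<N}"
      then have "N - k < N - i" "a < k" "k < N" using less.prems by auto
      then show "row N ?G k \<in> code N ?PG A" using less.hyps[of k] by blast
    qed
    have s: "(\<lambda>j. \<Sum>k\<in>{Suc i..<N}. P i k * row N ?G k j) \<in> code N ?PG A"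
      using ks by (intro span_sub code_subsp) auto
    have p: "row N ?PG i \<in> code N ?PG A"
      by (rule row_in_code) (use above less.prems in auto)
    show ?case
      apply (subst rowPG2[where B="GN m", OF less.prems(2) assms(6)])
      by (rule subsp_add[OF code_subsp p s])
  qed

  have C1: "code N ?G {a + 1 .. N-1} \<subseteq> code N ?PG A"
    by (rule code_sub[OF code_subsp]) (use C1i in auto)

  have C2row: "row N ?PG i \<in> code N ?G {b..N-1}" if "i \<in> A" for i
  proof -
    have iN: "i < N" and bi: "b \<le> i" using AN bmin that by auto
    have "\<forall>k\<in>{i..<N}. row N ?G k \<in> code N ?G {b..N-1}"
      using bi by (auto intro!: row_in_code)
    then show ?thesis unfolding rowPG[OF iN assms(6)] by (intro span_sub code_subsp) auto
  qed
  have C2: "code N ?PG A \<subseteq> code N ?G {b..N-1}"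
    by (rule code_sub[OF code_subsp]) (use C2row in auto)

  have orth1: "code N ?G {N-b..N-1} \<subseteq> {v. inner N (row N ?G k) v = 0}" if "b \<le> k" "k < N" for k
  proof (rule code_sub[OF inner_subsp2], intro ballI)
    fix j assume j: "j \<in> {N - b..N - 1} \<inter> {..<N}"
    have "\<not> disj m k j"
    proof
      assume "disj m k j"
      then have "k + j < N" using disj_sum[of m k j] assms(2) that j by auto
      then show False using j that bN by auto
    qed
    then show "row N ?G j \<in> {v. inner N (row N ?G k) v = 0}"
      using row_inner[of k m j] assms(2) that j by auto
  qed
  have C3: "code N ?G {N-b..N-1} \<subseteq> dual N (code N ?PG A)"
  proof
    fix v assume v: "v \<in> code N ?G {N-b..N-1}"
    have "code N ?G {b..N-1} \<subseteq> {u. inner N u v = 0}"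
    proof (rule code_sub[OF inner_subsp], intro ballI)
      fix i assume "i \<in> {b..N-1} \<inter> {..<N}"
      then have "b \<le> i" "i < N" by auto
      then show "row N ?G i \<in> {u. inner N u v = 0}" using orth1[of i] v by blast
    qed
    then show "v \<in> dual N (code N ?PG A)" using C2 code_vanish[OF v] unfolding dual_def by auto
  qed

  have C4: "dual N (code N ?PG A) \<subseteq> code N ?G {N-1-a..N-1}"
  proof
    fix v assume v: "v \<in> dual N (code N ?PG A)"
    have vz: "\<forall>j\<ge>N. v j = 0" and vo: "\<And>u. u \<in> code N ?PG A \<Longrightarrow> inner N u v = 0"
      using v by (auto simp: dual_def)
    have "v \<in> code N ?G UNIV" using all_in_span[of m v] vz assms(2) by simp
    then obtain c where c: "v = (\<lambda>j. \<Sum>i\<in>{..<N}. c i * row N ?G i j)" unfolding code_def by auto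
    have ortho: "inner N (row N ?G k) v = 0" if "a < k" "k < N" for k using vo C1i that by blast
    have cz: "c i = 0" if "i < N - 1 - a" for i
      using that
    proof (induction i rule: less_induct)
      case (less i)
      let ?k = "N - 1 - i"
      have k: "a < ?k" "?k < N" using less.prems aN by auto
      have iN: "i < N" using less.prems by simp
      have "inner N (row N ?G ?k) v = (\<Sum>i'\<in>{..<N}. c i' * inner N (row N ?G ?k) (row N ?G i'))"
        unfolding c by (rule inner_lin)
      also have "\<dots> = (\<Sum>i'\<in>{..<N}. if i' = i then c i else 0)"
      proof (rule sum.cong[OF refl])
        fix i' assume i': "i' \<in> {..<N}"
        have rin: "inner N (row N ?G ?k) (row N ?G i') = (if disj m i' ?k then 1 else 0)"
          using row_inner[of ?k m i'] disj_sym[of m ?k i'] assms(2) i' k by simp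
        show "c i' * inner N (row N ?G ?k) (row N ?G i') = (if i' = i then c i else 0)"
        proof (cases "i' = i")
          case True then show ?thesis using rin disj_comp_self[of i m] assms(2) iN by simp
        next
          case False
          show ?thesis
          proof (cases "disj m i' ?k")
            case True
            then have "i' \<le> i" using disj_comp[of i m i'] assms(2) i' iN by auto
            then have "i' < i" using False by simp
            then have "c i' = 0" using less.IH less.prems by simp
            then show ?thesis using False by simp
          next
            case False
            with \<open>i' \<noteq> i\<close> rin show ?thesis by simp
          qed
        qed
      qed
      also have "\<dots> = c i" using iN by (simp add: sum.delta)
      finally show ?case using ortho[OF k] by simp
    qed
    have "v = (\<lambda>j. \<Sum>i\<in>{N-1-a..N-1} \<inter> {..<N}. c i * row N ?G i j)"
      unfolding c
      apply (rule ext)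
      apply (rule sum.mono_neutral_right)
        apply simp
       apply auto[1]
      apply clarify
      subgoal for j i using cz[of i] by auto
      done
    then show "v \<in> code N ?G {N-1-a..N-1}" unfolding code_def by blast
  qed
  have e1: "Max ({0..N-1} - A) = a" "Min A = b" unfolding a_def b_def Ac_def by simp_all
  show ?thesis unfolding e1 using C1 C2 C3 C4 by (intro conjI)
qed

end
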